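(* Let $T_C$ be a finite complete binary tree whose root has two children, and let $T_C'$ and $T_C''$ be the subtrees of $T_C$ rooted at the left and right child of the root, respectively. Then $$\mathcal{S}(T_C) = \mathcal{S}(T_C') \cup \mathcal{S}(T_C'') \cup \big(B_r(T_C') \times B_l(T_C'')\big).$$
   Context: All trees are rooted, and children are designated left or right. A complete binary tree is a rooted tree in which every non-leaf vertex has exactly two children. A full binary tree is a rooted tree in which every vertex has 0 or 2 children. An internal tree of a complete binary tree $T_C$ is a full binary tree $T$ with $\mathrm{root}(T)=\mathrm{root}(T_C)$ whose vertices and edges are a subset of those of $T_C$ (left/right children as in $T_C$); $\mathcal{T}(T_C)$ is the set of all internal trees of $T_C$. For a tree $T$, $L(T)=(L_1(T),\dots,L_{|L(T)|}(T))$ is the sequence of its leaves from left-most to right-most. The set of successive leaf transitions of $T_C$ is $$\mathcal{S}(T_C) = \bigcup_{T\in\mathcal{T}(T_C)} \{(L_n(T), L_{n+1}(T)) : 1 \le n < |L(T)|\}.$$ The left boundary $B_l(T_C)$ is the set $\{\mathrm{left}^k(\mathrm{root}(T_C)) : k\ge 0\}$ of vertices reached from the root by repeatedly taking left children (including the root); the right boundary $B_r(T_C)$ is defined symmetrically with right children. *)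

theory Defs
  imports Main
begin

text \<open>Vertices of binary trees are encoded as paths (bool lists) from a global origin:
  the left child of v is v @ [False], the right child is v @ [True].
  Edges are the parent/child pairs (butlast v, v) inside V.\<close>

definition lchild :: "bool list \<Rightarrow> bool list" where
  "lchild v = v @ [False]"

definition rchild :: "bool list \<Rightarrow> bool list" where
  "rchild v = v @ [True]"

definition rooted_tree :: "bool list \<Rightarrow> bool list set \<Rightarrow> bool" where
  "rooted_tree r V \<longleftrightarrow> r \<in> V \<and> (\<forall>v\<in>V. \<exists>p. v = r @ p)
     \<and> (\<forall>v\<in>V. v \<noteq> r \<longrightarrow> butlast v \<in> V)"

definition full_binary_tree :: "bool list \<Rightarrow> bool list set \<Rightarrow> bool" where
  "full_binary_tree r V \<longleftrightarrow> rooted_tree r V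
     \<and> (\<forall>v\<in>V. lchild v \<in> V \<longleftrightarrow> rchild v \<in> V)"

text \<open>Complete binary tree (every non-leaf vertex has exactly two children); here finite.\<close>
definition complete_binary_tree :: "bool list \<Rightarrow> bool list set \<Rightarrow> bool" where
  "complete_binary_tree r V \<longleftrightarrow> finite V \<and> full_binary_tree r V"

text \<open>Internal trees of T_C = (r, V): full binary trees with the same root whose
  vertices (and hence edges, with the same left/right designation) are among those of T_C.\<close>
definition internal_trees :: "bool list \<Rightarrow> bool list set \<Rightarrow> bool list set set" where
  "internal_trees r V = {W. W \<subseteq> V \<and> full_binary_tree r W}"

definition leaves :: "bool list set \<Rightarrow> bool list set" where
  "leaves W = {w \<in> W. lchild w \<notin> W \<and> rchild w \<notin> W}"

definition left_of :: "bool list \<Rightarrow> bool list \<Rightarrow> bool" where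
  "left_of a b \<longleftrightarrow> (\<exists>p q q'. a = p @ False # q \<and> b = p @ True # q')"

definition leaf_seq :: "bool list set \<Rightarrow> bool list list" where
  "leaf_seq W = (THE xs. set xs = leaves W \<and> sorted_wrt left_of xs)"

definition succ_trans :: "bool list \<Rightarrow> bool list set \<Rightarrow> (bool list \<times> bool list) set" where
  "succ_trans r V = (\<Union>W\<in>internal_trees r V.
      {(leaf_seq W ! n, leaf_seq W ! (n + 1)) | n. n + 1 < length (leaf_seq W)})"

definition left_boundary :: "bool list \<Rightarrow> bool list set \<Rightarrow> bool list set" where
  "left_boundary r V = {r @ replicate k False | k. r @ replicate k False \<in> V}"

definition right_boundary :: "bool list \<Rightarrow> bool list set \<Rightarrow> bool list set" where
  "right_boundary r V = {r @ replicate k True | k. r @ replicate k True \<in> V}"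

definition subtree_at :: "bool list set \<Rightarrow> bool list \<Rightarrow> bool list set" where
  "subtree_at V u = {v \<in> V. \<exists>p. v = u @ p}"

end

theory Submission
  imports Defs
begin


lemma split_cmp: "p @ x # q = s @ y # t \<Longrightarrow> (p = s \<and> x = y \<and> q = t) \<or> (\<exists>m. s = p @ x # m) \<or> (\<exists>m. p = s @ y # m)"
proof (induction p arbitrary: s)
  case Nil then show ?case by (cases s) auto
next
  case (Cons a p) then show ?case by (cases s) auto
qed

lemma left_of_irrefl: "\<not> left_of a a"
  unfolding left_of_def by auto

lemma left_of_trans: assumes "left_of a b" "left_of b c" shows "left_of a c"
proof -
  obtain p q q' where a: "a = p @ False # q" and b: "b = p @ True # q'" using assms(1) unfolding left_of_def by blast
  obtain s t t' where b2: "b = s @ False # t" and c: "c = s @ True # t'" using assms(2) unfolding left_of_def by blast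
  have "p @ True # q' = s @ False # t" using b b2 by simp
  from split_cmp[OF this] show ?thesis
  proof (elim disjE exE)
    assume "p = s \<and> True = False \<and> q' = t" then show ?thesis by simp
  next
    fix m assume "s = p @ True # m"
    then show ?thesis unfolding left_of_def using a c by auto
  next
    fix m assume "p = s @ False # m"
    then show ?thesis unfolding left_of_def using a c by auto
  qed
qed

lemma left_of_asym: "left_of a b \<Longrightarrow> \<not> left_of b a"
  using left_of_trans left_of_irrefl by blast

lemma left_of_total: "\<not> (\<exists>t. a = b @ t) \<Longrightarrow> \<not> (\<exists>t. b = a @ t) \<Longrightarrow> left_of a b \<or> left_of b a"
proof (induction a arbitrary: b)
  case Nil then show ?case by auto
next
  case (Cons x a)
  then obtain y b' where b: "b = y # b'" by (cases b) auto
  show ?case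
  proof (cases "x = y")
    case True
    with Cons.prems b have "left_of a b' \<or> left_of b' a" using Cons.IH by auto
    then show ?thesis unfolding left_of_def b True
      by (metis append_Cons)
  next
    case False
    then show ?thesis unfolding left_of_def b
      by (metis (full_types) append_Nil)
  qed
qed

lemma left_of_cancel: "left_of (u @ x) (u @ y) \<longleftrightarrow> left_of x y"
proof
  assume "left_of x y" then show "left_of (u @ x) (u @ y)" unfolding left_of_def
    by (metis append.assoc)
next
  show "left_of (u @ x) (u @ y) \<Longrightarrow> left_of x y"
  proof (induction u)
    case Nil then show ?case by simp
  next
    case (Cons c u)
    then obtain p q q' where e: "c # u @ x = p @ False # q" "c # u @ y = p @ True # q'" unfolding left_of_def by auto
    then obtain p' where "p = c # p'" by (cases p) auto
    with e have "left_of (u@x) (u@y)" unfolding left_of_def by auto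
    then show ?case using Cons.IH by simp
  qed
qed

lemma left_of_FalseD: "left_of x y \<Longrightarrow> False \<in> set x"
  unfolding left_of_def by auto
lemma left_of_TrueD: "left_of x y \<Longrightarrow> True \<in> set y"
  unfolding left_of_def by auto

lemma left_of_LR: "left_of (r @ False # x) (r @ True # y)"
  unfolding left_of_def by blast

lemma not_left_of_RL: "\<not> left_of (r @ True # x) (r @ False # y)"
  using left_of_LR left_of_asym by blast




lemma exists_min:
  assumes "finite A" "A \<noteq> {}" "\<forall>x. \<not> P x x" "\<forall>x y z. P x y \<longrightarrow> P y z \<longrightarrow> P x z"
  shows "\<exists>m\<in>A. \<forall>y\<in>A. \<not> P y m"
  using assms(1,2)
proof (induction A rule: finite_induct)
  case empty then show ?case by simp
next
  case (insert x A)
  show ?case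
  proof (cases "A = {}")
    case True then show ?thesis using assms(3) by auto
  next
    case False
    then obtain m where m: "m \<in> A" "\<forall>y\<in>A. \<not> P y m" using insert.IH by blast
    show ?thesis
    proof (cases "P x m")
      case True
      have "\<not> P y x" if "y \<in> insert x A" for y
      proof
        assume "P y x"
        then have "P y m" using True assms(4) by blast
        then show False using that m assms(3) \<open>P y x\<close> by auto
      qed
      then show ?thesis by blast
    next
      case False
      then show ?thesis using m by blast
    qed
  qed
qed

lemma exists_sorted:
  assumes "finite A" "\<And>x. \<not> P x x" "\<And>x y z. P x y \<Longrightarrow> P y z \<Longrightarrow> P x z"
    "\<And>x y. x \<in> A \<Longrightarrow> y \<in> A \<Longrightarrow> x \<noteq> y \<Longrightarrow> P x y \<or> P y x"
  shows "\<exists>xs. set xs = A \<and> sorted_wrt P xs"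
  using assms(1,4)
proof (induction "card A" arbitrary: A)
  case 0
  then show ?case by auto
next
  case (Suc n)
  then have "A \<noteq> {}" by auto
  have "\<exists>m\<in>A. \<forall>y\<in>A. \<not> P y m" using exists_min[OF Suc.prems(1) \<open>A \<noteq> {}\<close>] assms(2,3) by blast
  then obtain m where m: "m \<in> A" "\<forall>y\<in>A. \<not> P y m" by blast
  have "n = card (A - {m})" using Suc.hyps(2) m(1) Suc.prems(1) by simp
  then obtain xs where xs: "set xs = A - {m}" "sorted_wrt P xs"
    using Suc.hyps(1)[of "A - {m}"] Suc.prems by auto
  have "\<forall>y\<in>set xs. P m y" using xs(1) m Suc.prems(2) by blast
  then show ?case using xs m by (intro exI[of _ "m # xs"]) auto
qed

lemma sorted_unique:
  assumes "\<And>x. \<not> P x x" "\<And>x y z. P x y \<Longrightarrow> P y z \<Longrightarrow> P x z"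
  shows "sorted_wrt P xs \<Longrightarrow> sorted_wrt P ys \<Longrightarrow> set xs = set ys \<Longrightarrow> xs = ys"
proof (induction xs arbitrary: ys)
  case Nil then show ?case by simp
next
  case (Cons x xs)
  then obtain y ys' where ys: "ys = y # ys'" by (cases ys) auto
  have xy: "x = y"
  proof (rule ccontr)
    assume "x \<noteq> y"
    then have "y \<in> set xs" "x \<in> set ys'" using Cons.prems ys by auto
    then have "P x y" "P y x" using Cons.prems ys by auto
    from assms(2)[OF this] assms(1) show False by simp
  qed
  have "x \<notin> set xs" "y \<notin> set ys'" using Cons.prems ys assms(1) by auto
  then have "set xs = set ys'" using Cons.prems(3) ys xy by auto
  then show ?case using Cons ys xy by auto
qed

lemma consec:
  assumes "\<And>x. \<not> P x x" "\<And>x y z. P x y \<Longrightarrow> P y z \<Longrightarrow> P x z" "sorted_wrt P xs"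
  shows "{(xs ! n, xs ! (n + 1)) | n. n + 1 < length xs} =
         {(a, b). a \<in> set xs \<and> b \<in> set xs \<and> P a b \<and> \<not> (\<exists>c\<in>set xs. P a c \<and> P c b)}"
proof -
  have S: "\<And>i j. i < j \<Longrightarrow> j < length xs \<Longrightarrow> P (xs ! i) (xs ! j)"
    using assms(3) unfolding sorted_wrt_iff_nth_less by blast
  have ord: "P (xs ! i) (xs ! j) \<Longrightarrow> i < length xs \<Longrightarrow> j < length xs \<Longrightarrow> i < j" for i j
  proof (rule ccontr)
    assume h: "P (xs ! i) (xs ! j)" "i < length xs" "j < length xs" "\<not> i < j"
    show False
    proof (cases "i = j")
      case True then show False using h assms(1) by simp
    next
      case False then have "P (xs ! j) (xs ! i)" using S h by simp
      from assms(2)[OF h(1) this] assms(1) show False by simp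
    qed
  qed
  show ?thesis
  proof (intro set_eqI iffI)
    fix z assume "z \<in> {(xs ! n, xs ! (n + 1)) | n. n + 1 < length xs}"
    then obtain n where z: "z = (xs ! n, xs ! (n + 1))" "n + 1 < length xs" by auto
    have nb: "\<not> P (xs ! n) c \<or> \<not> P c (xs ! (n+1))" if cin: "c \<in> set xs" for c
    proof -
      obtain m where m: "m < length xs" "c = xs ! m" using cin[unfolded in_set_conv_nth] by blast
      show ?thesis
      proof (rule ccontr)
        assume "\<not> ?thesis"
        then have h: "P (xs ! n) (xs ! m)" "P (xs ! m) (xs ! (n+1))" using m by auto
        have "n < m" using ord[OF h(1)] m z(2) by simp
        moreover have "m < n + 1" using ord[OF h(2)] m z(2) by simp
        ultimately show False by simp
      qed
    qed
    show "z \<in> {(a, b). a \<in> set xs \<and> b \<in> set xs \<and> P a b \<and> \<not> (\<exists>c\<in>set xs. P a c \<and> P c b)}"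
    proof -
      have "xs ! n \<in> set xs" "xs ! (n+1) \<in> set xs" using z(2) by auto
      moreover have "P (xs ! n) (xs ! (n+1))" using S[of n "n+1"] z(2) by simp
      ultimately show ?thesis using z(1) nb by blast
    qed
  next
    fix z assume "z \<in> {(a, b). a \<in> set xs \<and> b \<in> set xs \<and> P a b \<and> \<not> (\<exists>c\<in>set xs. P a c \<and> P c b)}"
    then obtain a b where z: "z = (a, b)" "a \<in> set xs" "b \<in> set xs" "P a b" and nb: "\<not> (\<exists>c\<in>set xs. P a c \<and> P c b)" by auto
    obtain i where "i < length xs" "a = xs ! i" using z(2)[unfolded in_set_conv_nth] by blast
    moreover obtain j where "j < length xs" "b = xs ! j" using z(3)[unfolded in_set_conv_nth] by blast
    ultimately have ij: "i < length xs" "a = xs ! i" "j < length xs" "b = xs ! j" by blast+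
    have "i < j" using ord[of i j] ij z(4) by simp
    have "j = i + 1"
    proof (rule ccontr)
      assume "j \<noteq> i + 1"
      then have "i + 1 < j" using \<open>i < j\<close> by simp
      then have "P a (xs ! (i+1))" "P (xs ! (i+1)) b" using S ij by auto
      then show False using nb ij \<open>i + 1 < j\<close> by (meson less_trans nth_mem)
    qed
    then show "z \<in> {(xs ! n, xs ! (n + 1)) | n. n + 1 < length xs}" using z ij by auto
  qed
qed




lemma rooted_ext: "rooted_tree r W \<Longrightarrow> v \<in> W \<Longrightarrow> \<exists>t. v = r @ t"
  unfolding rooted_tree_def by blast

lemma anc: assumes "rooted_tree r W" shows "v @ q \<in> W \<Longrightarrow> (\<exists>t. v = r @ t) \<Longrightarrow> v \<in> W"
proof (induction q rule: rev_induct)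
  case Nil then show ?case by simp
next
  case (snoc x q)
  have "v @ q @ [x] \<noteq> r" using snoc.prems(2) by (metis append_assoc length_append length_append_singleton not_add_less1 not_less_eq)
  then have "butlast (v @ q @ [x]) \<in> W" using assms snoc.prems(1) unfolding rooted_tree_def by simp
  then have "v @ q \<in> W" by (simp add: butlast_append)
  then show ?case using snoc.IH snoc.prems(2) by blast
qed

lemma sub_full:
  assumes "full_binary_tree r W" "c \<in> W"
  shows "full_binary_tree c (subtree_at W c)"
proof -
  have rt: "rooted_tree r W" using assms(1) unfolding full_binary_tree_def by simp
  obtain t0 where c: "c = r @ t0" using rooted_ext[OF rt assms(2)] by blast
  have "butlast v \<in> subtree_at W c" if vh: "v \<in> subtree_at W c" "v \<noteq> c" for v
  proof -
    obtain p where v: "v = c @ p" "v \<in> W" using vh(1) unfolding subtree_at_def by blast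
    have "p \<noteq> []" using vh(2) v by auto
    then have "v \<noteq> r" using v c by auto
    then have "butlast v \<in> W" using rt v unfolding rooted_tree_def by blast
    moreover have "butlast v = c @ butlast p" using v \<open>p \<noteq> []\<close> by (simp add: butlast_append)
    ultimately show ?thesis unfolding subtree_at_def by blast
  qed
  then have "rooted_tree c (subtree_at W c)" unfolding rooted_tree_def subtree_at_def using assms(2) by auto
  then show ?thesis using assms(1) unfolding full_binary_tree_def subtree_at_def lchild_def rchild_def by auto
qed

lemma single_full: "full_binary_tree u {u}"
  unfolding full_binary_tree_def rooted_tree_def lchild_def rchild_def by auto

lemma combine:
  assumes "full_binary_tree (lchild r) W1" "full_binary_tree (rchild r) W2"
  shows "full_binary_tree r (insert r (W1 \<union> W2))"
proof -
  have r1: "rooted_tree (lchild r) W1" and r2: "rooted_tree (rchild r) W2"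
    using assms unfolding full_binary_tree_def by auto
  have e1: "v \<in> W1 \<Longrightarrow> \<exists>t. v = r @ False # t" for v using rooted_ext[OF r1] unfolding lchild_def by fastforce
  have e2: "v \<in> W2 \<Longrightarrow> \<exists>t. v = r @ True # t" for v using rooted_ext[OF r2] unfolding rchild_def by fastforce
  have l1: "lchild r \<in> W1" "rchild r \<in> W2" using r1 r2 unfolding rooted_tree_def by auto
  have rt: "rooted_tree r (insert r (W1 \<union> W2))"
    unfolding rooted_tree_def
  proof (intro conjI ballI impI)
    show "r \<in> insert r (W1 \<union> W2)" by simp
  next
    fix v assume "v \<in> insert r (W1 \<union> W2)" then show "\<exists>p. v = r @ p" using e1 e2 by blast
  next
    fix v assume v: "v \<in> insert r (W1 \<union> W2)" "v \<noteq> r"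
    then consider "v \<in> W1" | "v \<in> W2" by blast
    then show "butlast v \<in> insert r (W1 \<union> W2)"
    proof cases
      case 1 then show ?thesis using r1 unfolding rooted_tree_def lchild_def by (cases "v = r @ [False]") auto
    next
      case 2 then show ?thesis using r2 unfolding rooted_tree_def rchild_def by (cases "v = r @ [True]") auto
    qed
  qed
  have f1: "\<forall>v\<in>W1. lchild v \<in> W1 \<longleftrightarrow> rchild v \<in> W1" "\<forall>v\<in>W2. lchild v \<in> W2 \<longleftrightarrow> rchild v \<in> W2"
    using assms unfolding full_binary_tree_def by auto
  have nW2: "v \<in> W1 \<Longrightarrow> w \<notin> W2 \<and> w \<noteq> r" if "w = v @ [x]" for v w x
    using that e1[of v] e2[of w] by auto
  have nW1: "v \<in> W2 \<Longrightarrow> w \<notin> W1 \<and> w \<noteq> r" if "w = v @ [x]" for v w x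
    using that e2[of v] e1[of w] by auto
  have "lchild v \<in> insert r (W1 \<union> W2) \<longleftrightarrow> rchild v \<in> insert r (W1 \<union> W2)" if v: "v \<in> insert r (W1 \<union> W2)" for v
  proof -
    consider "v = r" | "v \<in> W1" | "v \<in> W2" using v by blast
    then show ?thesis
    proof cases
      case 1 then show ?thesis using l1 by auto
    next
      case 2 then show ?thesis using f1(1) nW2[of "lchild v" v False] nW2[of "rchild v" v True]
        unfolding lchild_def rchild_def by auto
    next
      case 3 then show ?thesis using f1(2) nW1[of "lchild v" v False] nW1[of "rchild v" v True]
        unfolding lchild_def rchild_def by auto
    qed
  qed
  then show ?thesis using rt unfolding full_binary_tree_def by blast
qed

lemma combine_leaves:
  assumes "full_binary_tree (lchild r) W1" "full_binary_tree (rchild r) W2"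
  shows "leaves (insert r (W1 \<union> W2)) = leaves W1 \<union> leaves W2"
proof -
  have r1: "rooted_tree (lchild r) W1" and r2: "rooted_tree (rchild r) W2"
    using assms unfolding full_binary_tree_def by auto
  have e1: "v \<in> W1 \<Longrightarrow> \<exists>t. v = r @ False # t" for v using rooted_ext[OF r1] unfolding lchild_def by fastforce
  have e2: "v \<in> W2 \<Longrightarrow> \<exists>t. v = r @ True # t" for v using rooted_ext[OF r2] unfolding rchild_def by fastforce
  have l1: "lchild r \<in> W1" "rchild r \<in> W2" using r1 r2 unfolding rooted_tree_def by auto
  have nW2: "v \<in> W1 \<Longrightarrow> w \<notin> W2 \<and> w \<noteq> r" if "w = v @ [x]" for v w x
    using that e1[of v] e2[of w] by auto
  have nW1: "v \<in> W2 \<Longrightarrow> w \<notin> W1 \<and> w \<noteq> r" if "w = v @ [x]" for v w x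
    using that e2[of v] e1[of w] by auto
  have rn: "r \<notin> W1" "r \<notin> W2" using e1 e2 by auto
  show ?thesis
  proof (intro set_eqI iffI)
    fix v assume v: "v \<in> leaves (insert r (W1 \<union> W2))"
    then have "v \<noteq> r" using l1 unfolding leaves_def by auto
    then show "v \<in> leaves W1 \<union> leaves W2" using v unfolding leaves_def by auto
  next
    fix v assume v: "v \<in> leaves W1 \<union> leaves W2"
    then consider "v \<in> leaves W1" | "v \<in> leaves W2" by blast
    then show "v \<in> leaves (insert r (W1 \<union> W2))"
    proof cases
      case 1 then show ?thesis using nW2[of "lchild v" v False] nW2[of "rchild v" v True]
        unfolding leaves_def lchild_def rchild_def by auto
    next
      case 2 then show ?thesis using nW1[of "lchild v" v False] nW1[of "rchild v" v True]
        unfolding leaves_def lchild_def rchild_def by auto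
    qed
  qed
qed

lemma subtree_combine:
  assumes "full_binary_tree (lchild r) W1" "full_binary_tree (rchild r) W2"
  shows "subtree_at (insert r (W1 \<union> W2)) (lchild r) = W1"
    "subtree_at (insert r (W1 \<union> W2)) (rchild r) = W2"
proof -
  have r1: "rooted_tree (lchild r) W1" and r2: "rooted_tree (rchild r) W2"
    using assms unfolding full_binary_tree_def by auto
  have e1: "v \<in> W1 \<Longrightarrow> \<exists>t. v = r @ False # t" for v using rooted_ext[OF r1] unfolding lchild_def by fastforce
  have e2: "v \<in> W2 \<Longrightarrow> \<exists>t. v = r @ True # t" for v using rooted_ext[OF r2] unfolding rchild_def by fastforce
  show "subtree_at (insert r (W1 \<union> W2)) (lchild r) = W1"
  proof (intro set_eqI iffI)
    fix v assume "v \<in> subtree_at (insert r (W1 \<union> W2)) (lchild r)"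
    then obtain p where v: "v \<in> insert r (W1 \<union> W2)" "v = r @ False # p" unfolding subtree_at_def lchild_def by auto
    have "v \<notin> W2" using e2[of v] v(2) by auto
    moreover have "v \<noteq> r" using v(2) by auto
    ultimately show "v \<in> W1" using v(1) by blast
  next
    fix v assume "v \<in> W1"
    then show "v \<in> subtree_at (insert r (W1 \<union> W2)) (lchild r)"
      using rooted_ext[OF r1 \<open>v \<in> W1\<close>] unfolding subtree_at_def by blast
  qed
  show "subtree_at (insert r (W1 \<union> W2)) (rchild r) = W2"
  proof (intro set_eqI iffI)
    fix v assume "v \<in> subtree_at (insert r (W1 \<union> W2)) (rchild r)"
    then obtain p where v: "v \<in> insert r (W1 \<union> W2)" "v = r @ True # p" unfolding subtree_at_def rchild_def by auto
    have "v \<notin> W1" using e1[of v] v(2) by auto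
    moreover have "v \<noteq> r" using v(2) by auto
    ultimately show "v \<in> W2" using v(1) by blast
  next
    fix v assume "v \<in> W2"
    then show "v \<in> subtree_at (insert r (W1 \<union> W2)) (rchild r)"
      using rooted_ext[OF r2 \<open>v \<in> W2\<close>] unfolding subtree_at_def by blast
  qed
qed

lemma decompose:
  assumes "full_binary_tree r W" "lchild r \<in> W"
  shows "W = insert r (subtree_at W (lchild r) \<union> subtree_at W (rchild r))"
proof -
  have rt: "rooted_tree r W" using assms unfolding full_binary_tree_def by simp
  show ?thesis
  proof (intro set_eqI iffI)
    fix v assume "v \<in> W"
    then obtain t where "v = r @ t" using rooted_ext[OF rt] by blast
    show "v \<in> insert r (subtree_at W (lchild r) \<union> subtree_at W (rchild r))"
    proof (cases t)
      case Nil then show ?thesis using \<open>v = r @ t\<close> by simp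
    next
      case (Cons a l)
      then have "v = (r @ [a]) @ l" using \<open>v = r @ t\<close> by simp
      then show ?thesis using \<open>v \<in> W\<close> unfolding subtree_at_def lchild_def rchild_def
        by (cases a) blast+
    qed
  next
    fix v assume "v \<in> insert r (subtree_at W (lchild r) \<union> subtree_at W (rchild r))"
    then show "v \<in> W" using rt unfolding subtree_at_def rooted_tree_def by auto
  qed
qed

lemma only_root:
  assumes "full_binary_tree r W" "lchild r \<notin> W"
  shows "W = {r}"
proof -
  have rt: "rooted_tree r W" using assms unfolding full_binary_tree_def by simp
  have "r \<in> W" using rt unfolding rooted_tree_def by simp
  then have "rchild r \<notin> W" using assms unfolding full_binary_tree_def by blast
  have "v = r" if vW: "v \<in> W" for v
  proof (rule ccontr)
    assume "v \<noteq> r"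
    obtain t where "v = r @ t" using rooted_ext[OF rt vW] by blast
    with \<open>v \<noteq> r\<close> have "t \<noteq> []" by auto
    then obtain x t' where "t = x # t'" by (cases t) auto
    then have "(r @ [x]) @ t' \<in> W" using vW \<open>v = r @ t\<close> by simp
    then have "r @ [x] \<in> W" using anc[OF rt, of "r @ [x]" t'] by blast
    then show False using assms(2) \<open>rchild r \<notin> W\<close> unfolding lchild_def rchild_def by (cases x) simp_all
  qed
  then show ?thesis using \<open>r \<in> W\<close> by blast
qed

lemma leaf_below:
  assumes "finite W" "v \<in> W"
  shows "\<exists>c\<in>leaves W. \<exists>t. c = v @ t"
proof -
  let ?S = "{w \<in> W. \<exists>t. w = v @ t}"
  have fin: "finite ?S" using assms(1) by simp
  have ne: "v \<in> ?S" using assms(2) by auto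
  have "Max (length ` ?S) \<in> length ` ?S" using fin ne by (intro Max_in) auto
  then obtain w where w0: "Max (length ` ?S) = length w" "w \<in> ?S" by (rule imageE)
  then have w1: "w \<in> ?S" "length w = Max (length ` ?S)" by simp_all
  have w2: "\<forall>w'\<in>?S. length w' \<le> length w" using Max_ge[OF finite_imageI[OF fin]] w1(2) by auto
  obtain t where wt: "w = v @ t" using w1(1) by blast
  have "lchild w \<notin> W"
  proof
    assume "lchild w \<in> W"
    then have "lchild w \<in> ?S" using wt unfolding lchild_def by auto
    then have "length (lchild w) \<le> length w" using w2 by blast
    then show False unfolding lchild_def by simp
  qed
  moreover have "rchild w \<notin> W"
  proof
    assume "rchild w \<in> W"
    then have "rchild w \<in> ?S" using wt unfolding rchild_def by auto
    then have "length (rchild w) \<le> length w" using w2 by blast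
    then show False unfolding rchild_def by simp
  qed
  ultimately have w: "w \<in> leaves W" using w1(1) unfolding leaves_def by blast
  then show ?thesis using wt by blast
qed

lemma leaves_incomparable:
  assumes "rooted_tree r W" "a \<in> leaves W" "b \<in> leaves W" "a = b @ q" "q \<noteq> []"
  shows False
proof -
  obtain x q' where q: "q = x # q'" using assms(5) by (cases q) auto
  have "b \<in> W" using assms(3) unfolding leaves_def by auto
  obtain t where "b = r @ t" using rooted_ext[OF assms(1) \<open>b \<in> W\<close>] by blast
  have "(b @ [x]) @ q' \<in> W" using assms(2,4) q unfolding leaves_def by auto
  moreover have "\<exists>s. b @ [x] = r @ s" using \<open>b = r @ t\<close> by simp
  ultimately have "b @ [x] \<in> W" using anc[OF assms(1), of "b @ [x]" q'] by blast
  then show False using assms(3) unfolding leaves_def lchild_def rchild_def by (cases x) auto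
qed




definition tset :: "bool list set \<Rightarrow> (bool list \<times> bool list) set" where
  "tset W = {(a, b). a \<in> leaves W \<and> b \<in> leaves W \<and> left_of a b \<and> \<not> (\<exists>c\<in>leaves W. left_of a c \<and> left_of c b)}"

lemma leaf_seq_props:
  assumes "rooted_tree r W" "finite W"
  shows "set (leaf_seq W) = leaves W \<and> sorted_wrt left_of (leaf_seq W)"
proof -
  have fin: "finite (leaves W)" using assms(2) unfolding leaves_def by simp
  have tot: "left_of a b \<or> left_of b a" if ab: "a \<in> leaves W" "b \<in> leaves W" "a \<noteq> b" for a b
  proof (rule left_of_total)
    show "\<not> (\<exists>t. a = b @ t)"
    proof
      assume "\<exists>t. a = b @ t"
      then obtain t where t: "a = b @ t" by blast
      then have "t \<noteq> []" using ab(3) by auto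
      then show False using leaves_incomparable[OF assms(1) ab(1) ab(2) t] by blast
    qed
    show "\<not> (\<exists>t. b = a @ t)"
    proof
      assume "\<exists>t. b = a @ t"
      then obtain t where t: "b = a @ t" by blast
      then have "t \<noteq> []" using ab(3) by auto
      then show False using leaves_incomparable[OF assms(1) ab(2) ab(1) t] by blast
    qed
  qed
  have ex: "\<exists>xs. set xs = leaves W \<and> sorted_wrt left_of xs"
    by (rule exists_sorted[OF fin]) (auto intro: left_of_trans simp: left_of_irrefl tot)
  then obtain xs where xs: "set xs = leaves W \<and> sorted_wrt left_of xs" by blast
  have uq: "ys = xs" if "set ys = leaves W \<and> sorted_wrt left_of ys" for ys
    using sorted_unique[of left_of ys xs] left_of_irrefl left_of_trans that xs by blast
  have "\<exists>!xs. set xs = leaves W \<and> sorted_wrt left_of xs"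
    using xs uq by blast
  from theI'[OF this] show ?thesis unfolding leaf_seq_def .
qed

lemma trans_eq:
  assumes "rooted_tree r W" "finite W"
  shows "{(leaf_seq W ! n, leaf_seq W ! (n + 1)) | n. n + 1 < length (leaf_seq W)} = tset W"
proof -
  have p: "set (leaf_seq W) = leaves W" "sorted_wrt left_of (leaf_seq W)"
    using leaf_seq_props[OF assms] by auto
  have "{(leaf_seq W ! n, leaf_seq W ! (n + 1)) | n. n + 1 < length (leaf_seq W)} =
    {(a, b). a \<in> set (leaf_seq W) \<and> b \<in> set (leaf_seq W) \<and> left_of a b \<and>
       \<not> (\<exists>c\<in>set (leaf_seq W). left_of a c \<and> left_of c b)}"
    by (rule consec[OF left_of_irrefl left_of_trans p(2)])
  then show ?thesis unfolding tset_def p(1) .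
qed

lemma succ_eq:
  assumes "finite V"
  shows "succ_trans r V = (\<Union>W\<in>internal_trees r V. tset W)"
  unfolding succ_trans_def
proof (rule SUP_cong)
  fix W assume "W \<in> internal_trees r V"
  then have "rooted_tree r W" "finite W" using assms finite_subset
    unfolding internal_trees_def full_binary_tree_def by auto
  then show "{(leaf_seq W ! n, leaf_seq W ! (n + 1)) | n. n + 1 < length (leaf_seq W)} = tset W"
    by (rule trans_eq)
qed simp

lemma exists_leaf_tree:
  "full_binary_tree u V \<Longrightarrow> u @ p \<in> V \<Longrightarrow> \<exists>W\<subseteq>V. full_binary_tree u W \<and> u @ p \<in> leaves W"
proof (induction p arbitrary: u V)
  case Nil
  have "leaves {u} = {u}" unfolding leaves_def lchild_def rchild_def by auto
  then show ?case using Nil single_full[of u] by auto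
next
  case (Cons x p)
  have rt: "rooted_tree u V" using Cons.prems(1) unfolding full_binary_tree_def by simp
  have uV: "u \<in> V" using rt unfolding rooted_tree_def by simp
  let ?c = "u @ [x]"
  have "?c @ p \<in> V" using Cons.prems(2) by simp
  then have cV: "?c \<in> V" using anc[OF rt, of ?c p] by blast
  have fc: "full_binary_tree ?c (subtree_at V ?c)" by (rule sub_full[OF Cons.prems(1) cV])
  have "?c @ p \<in> subtree_at V ?c" using \<open>?c @ p \<in> V\<close> unfolding subtree_at_def by blast
  from Cons.IH[OF fc this] obtain W' where W': "W' \<subseteq> subtree_at V ?c" "full_binary_tree ?c W'" "?c @ p \<in> leaves W'"
    by blast
  have W'V: "W' \<subseteq> V" using W'(1) unfolding subtree_at_def by blast
  have both: "lchild u \<in> V" "rchild u \<in> V"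
    using cV uV Cons.prems(1) unfolding full_binary_tree_def lchild_def rchild_def by (cases x; auto)+
  show ?case
  proof (cases x)
    case False
    then have fl: "full_binary_tree (lchild u) W'" using W'(2) unfolding lchild_def by simp
    let ?W = "insert u (W' \<union> {rchild u})"
    have "full_binary_tree u ?W" by (rule combine[OF fl single_full])
    moreover have "?W \<subseteq> V" using W'V uV both by auto
    moreover have "u @ x # p \<in> leaves ?W" using combine_leaves[OF fl single_full] W'(3) by simp
    ultimately show ?thesis by blast
  next
    case True
    then have fr: "full_binary_tree (rchild u) W'" using W'(2) unfolding rchild_def by simp
    let ?W = "insert u ({lchild u} \<union> W')"
    have "full_binary_tree u ?W" by (rule combine[OF single_full fr])
    moreover have "?W \<subseteq> V" using W'V uV both by auto
    moreover have "u @ x # p \<in> leaves ?W" using combine_leaves[OF single_full fr] W'(3) by simp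
    ultimately show ?thesis by blast
  qed
qed




theorem mainTheorem5:
  fixes r :: "bool list" and V :: "bool list set"
  assumes "complete_binary_tree r V"
    and "lchild r \<in> V" and "rchild r \<in> V"
  shows "succ_trans r V =
           succ_trans (lchild r) (subtree_at V (lchild r))
         \<union> succ_trans (rchild r) (subtree_at V (rchild r))
         \<union> (right_boundary (lchild r) (subtree_at V (lchild r))
              \<times> left_boundary (rchild r) (subtree_at V (rchild r)))"
proof -
  define L where "L = lchild r"
  define R where "R = rchild r"
  define VL where "VL = subtree_at V L"
  define VR where "VR = subtree_at V R"
  have finV: "finite V" and fV: "full_binary_tree r V" using assms(1) unfolding complete_binary_tree_def by auto
  have rtV: "rooted_tree r V" using fV unfolding full_binary_tree_def by simp
  have rV: "r \<in> V" using rtV unfolding rooted_tree_def by simp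
  have LV: "L \<in> V" "R \<in> V" using assms(2,3) unfolding L_def R_def by auto
  have fVL: "full_binary_tree L VL" unfolding VL_def by (rule sub_full[OF fV LV(1)])
  have fVR: "full_binary_tree R VR" unfolding VR_def by (rule sub_full[OF fV LV(2)])
  have VLV: "VL \<subseteq> V" "VR \<subseteq> V" unfolding VL_def VR_def subtree_at_def by auto
  have finVL: "finite VL" "finite VR" using finV VLV finite_subset by auto
  have L': "L = r @ [False]" "R = r @ [True]" unfolding L_def R_def lchild_def rchild_def by simp_all
  have eW1: "\<exists>t. x = r @ False # t" if "full_binary_tree L W" "x \<in> W" for W x
    using rooted_ext[of L W x] that L'(1) unfolding full_binary_tree_def by auto
  have eW2: "\<exists>t. x = r @ True # t" if "full_binary_tree R W" "x \<in> W" for W x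
    using rooted_ext[of R W x] that L'(2) unfolding full_binary_tree_def by auto
  have leaf_in: "x \<in> W" if "x \<in> leaves W" for x W using that unfolding leaves_def by blast
  have LR: "(\<Union>W\<in>internal_trees r V. tset W) =
     (\<Union>W\<in>internal_trees L VL. tset W) \<union> (\<Union>W\<in>internal_trees R VR. tset W)
     \<union> (right_boundary L VL \<times> left_boundary R VR)" (is "?A = ?B \<union> ?C \<union> ?D")
  proof (intro equalityI subsetI)
    fix z assume "z \<in> ?A"
    then obtain W where W: "W \<subseteq> V" "full_binary_tree r W" "z \<in> tset W"
      unfolding internal_trees_def by blast
    obtain a b where z: "z = (a, b)" by (cases z)
    have ab: "a \<in> leaves W" "b \<in> leaves W" "left_of a b" "\<not> (\<exists>c\<in>leaves W. left_of a c \<and> left_of c b)"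
      using W(3) unfolding z tset_def by auto
    show "z \<in> ?B \<union> ?C \<union> ?D"
    proof (cases "L \<in> W")
      case False
      then have "W = {r}" using only_root[OF W(2)] unfolding L_def by simp
      then have "a = r" "b = r" using ab(1,2) leaf_in by auto
      then show ?thesis using ab(3) left_of_irrefl by simp
    next
      case True
      define W1 where "W1 = subtree_at W L"
      define W2 where "W2 = subtree_at W R"
      have rW: "r \<in> W" using W(2) unfolding full_binary_tree_def rooted_tree_def by simp
      have RW: "R \<in> W" using bspec[OF conjunct2[OF W(2)[unfolded full_binary_tree_def]] rW] True
        unfolding L_def R_def by simp
      have f1: "full_binary_tree L W1" unfolding W1_def by (rule sub_full[OF W(2) True])
      have f2: "full_binary_tree R W2" unfolding W2_def by (rule sub_full[OF W(2) RW])
      have f1': "full_binary_tree (lchild r) W1" and f2': "full_binary_tree (rchild r) W2"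
        using f1 f2 unfolding L_def R_def by auto
      have Weq: "W = insert r (W1 \<union> W2)" unfolding W1_def W2_def L_def R_def
        by (rule decompose[OF W(2)]) (use True L_def in simp)
      have lv: "leaves W = leaves W1 \<union> leaves W2"
        using combine_leaves[OF f1' f2'] Weq by simp
      have W1s: "W1 \<subseteq> VL" "W2 \<subseteq> VR" using W(1) unfolding W1_def W2_def VL_def VR_def subtree_at_def by auto
      have finW1: "finite W1" "finite W2" using W1s finVL finite_subset by auto
      have it1: "W1 \<in> internal_trees L VL" "W2 \<in> internal_trees R VR"
        unfolding internal_trees_def using W1s f1 f2 by auto
      have rt1: "rooted_tree L W1" "rooted_tree R W2" using f1 f2 unfolding full_binary_tree_def by auto
      consider "a \<in> leaves W1" "b \<in> leaves W1" | "a \<in> leaves W2" "b \<in> leaves W2"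
        | "a \<in> leaves W2" "b \<in> leaves W1" | "a \<in> leaves W1" "b \<in> leaves W2"
        using ab(1,2) lv by blast
      then show ?thesis
      proof cases
        case 1
        then have "z \<in> tset W1" using ab lv unfolding z tset_def by blast
        then show ?thesis using it1 by blast
      next
        case 2
        then have "z \<in> tset W2" using ab lv unfolding z tset_def by blast
        then show ?thesis using it1 by blast
      next
        case 3
        obtain s where "a = r @ True # s" using eW2[OF f2 leaf_in[OF 3(1)]] by blast
        moreover obtain s' where "b = r @ False # s'" using eW1[OF f1 leaf_in[OF 3(2)]] by blast
        ultimately show ?thesis using ab(3) not_left_of_RL by blast
      next
        case 4
        obtain p where ap: "a = L @ p" using rooted_ext[OF rt1(1) leaf_in[OF 4(1)]] by blast
        obtain s' where bs: "b = r @ True # s'" using eW2[OF f2 leaf_in[OF 4(2)]] by blast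
        have "False \<notin> set p"
        proof
          assume "False \<in> set p"
          then obtain q s where p: "p = q @ False # s" by (meson split_list)
          have "(L @ q) @ [False] @ s \<in> W1" using leaf_in[OF 4(1)] ap p by simp
          then have "L @ q @ [False] \<in> W1" using anc[OF rt1(1), of "L @ q @ [False]" s] by simp
          moreover have "L @ q \<in> W1" using anc[OF rt1(1), of "L @ q" "[False]"] \<open>L @ q @ [False] \<in> W1\<close> by simp
          ultimately have "rchild (L @ q) \<in> W1"
            using bspec[OF conjunct2[OF f1[unfolded full_binary_tree_def]] \<open>L @ q \<in> W1\<close>]
            unfolding lchild_def by simp
          then obtain c t where c: "c \<in> leaves W1" "c = (L @ q) @ True # t"
            using leaf_below[OF finW1(1), of "rchild (L @ q)"] unfolding rchild_def by auto
          have "c \<in> leaves W" using c(1) lv by simp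
          moreover have "left_of a c" using ap p c(2) left_of_LR[of "L @ q" s t] by simp
          moreover have "left_of c b" using c(2) bs L'(1) left_of_LR by simp
          ultimately show False using ab(4) by blast
        qed
        then have "\<forall>x\<in>set p. x = True" by (metis (full_types))
        then have "replicate (length p) True = p" by (rule replicate_length_same)
        then have ak: "a = L @ replicate (length p) True" using ap by simp
        have "a \<in> VL" using W1s(1) leaf_in[OF 4(1)] by blast
        then have aR: "a \<in> right_boundary L VL"
          unfolding right_boundary_def using ak by blast
        obtain p2 where bp: "b = R @ p2" using rooted_ext[OF rt1(2) leaf_in[OF 4(2)]] by blast
        obtain s2 where as: "a = r @ False # s2" using eW1[OF f1 leaf_in[OF 4(1)]] by blast
        have "True \<notin> set p2"
        proof
          assume "True \<in> set p2"
          then obtain q s where p: "p2 = q @ True # s" by (meson split_list)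
          have "(R @ q) @ [True] @ s \<in> W2" using leaf_in[OF 4(2)] bp p by simp
          then have "R @ q @ [True] \<in> W2" using anc[OF rt1(2), of "R @ q @ [True]" s] by simp
          moreover have "R @ q \<in> W2" using anc[OF rt1(2), of "R @ q" "[True]"] \<open>R @ q @ [True] \<in> W2\<close> by simp
          ultimately have "lchild (R @ q) \<in> W2"
            using bspec[OF conjunct2[OF f2[unfolded full_binary_tree_def]] \<open>R @ q \<in> W2\<close>]
            unfolding rchild_def by simp
          then obtain c t where c: "c \<in> leaves W2" "c = (R @ q) @ False # t"
            using leaf_below[OF finW1(2), of "lchild (R @ q)"] unfolding lchild_def by auto
          have "c \<in> leaves W" using c(1) lv by simp
          moreover have "left_of c b" using bp p c(2) left_of_LR[of "R @ q" t s] by simp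
          moreover have "left_of a c" using c(2) as L'(2) left_of_LR by simp
          ultimately show False using ab(4) by blast
        qed
        then have "\<forall>x\<in>set p2. x = False" by (metis (full_types))
        then have "replicate (length p2) False = p2" by (rule replicate_length_same)
        then have bk: "b = R @ replicate (length p2) False" using bp by simp
        have "b \<in> VR" using W1s(2) leaf_in[OF 4(2)] by blast
        then have bL: "b \<in> left_boundary R VR"
          unfolding left_boundary_def using bk by blast
        show ?thesis using aR bL z by blast
      qed
    qed
  next
    fix z assume "z \<in> ?B \<union> ?C \<union> ?D"
    then consider (B) "z \<in> ?B" | (C) "z \<in> ?C" | (D) "z \<in> ?D" by blast
    then show "z \<in> ?A"
    proof cases
      case B
      then obtain W1 where W1: "W1 \<subseteq> VL" "full_binary_tree L W1" "z \<in> tset W1"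
        unfolding internal_trees_def by blast
      obtain a b where z: "z = (a, b)" by (cases z)
      have ab: "a \<in> leaves W1" "b \<in> leaves W1" "left_of a b" "\<not> (\<exists>c\<in>leaves W1. left_of a c \<and> left_of c b)"
        using W1(3) unfolding z tset_def by auto
      have f1': "full_binary_tree (lchild r) W1" using W1(2) L_def by simp
      have sR: "full_binary_tree (rchild r) {rchild r}" by (rule single_full)
      let ?W = "insert r (W1 \<union> {rchild r})"
      have fW: "full_binary_tree r ?W" by (rule combine[OF f1' sR])
      have lv: "leaves ?W = leaves W1 \<union> leaves {rchild r}" by (rule combine_leaves[OF f1' sR])
      have lR: "leaves {rchild r} = {R}" unfolding leaves_def lchild_def rchild_def R_def by auto
      have sub: "?W \<subseteq> V" using W1(1) VLV rV LV(2) R_def by auto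
      obtain s where bs: "b = r @ False # s" using eW1[OF W1(2) leaf_in[OF ab(2)]] by blast
      have "\<not> left_of R b" using bs L'(2) not_left_of_RL[of r "[]" s] by simp
      then have "z \<in> tset ?W" using ab lv lR unfolding z tset_def by auto
      then show ?thesis using fW sub unfolding internal_trees_def by blast
    next
      case C
      then obtain W2 where W2: "W2 \<subseteq> VR" "full_binary_tree R W2" "z \<in> tset W2"
        unfolding internal_trees_def by blast
      obtain a b where z: "z = (a, b)" by (cases z)
      have ab: "a \<in> leaves W2" "b \<in> leaves W2" "left_of a b" "\<not> (\<exists>c\<in>leaves W2. left_of a c \<and> left_of c b)"
        using W2(3) unfolding z tset_def by auto
      have f2': "full_binary_tree (rchild r) W2" using W2(2) R_def by simp
      have sL: "full_binary_tree (lchild r) {lchild r}" by (rule single_full)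
      let ?W = "insert r ({lchild r} \<union> W2)"
      have fW: "full_binary_tree r ?W" by (rule combine[OF sL f2'])
      have lv: "leaves ?W = leaves {lchild r} \<union> leaves W2" by (rule combine_leaves[OF sL f2'])
      have lL: "leaves {lchild r} = {L}" unfolding leaves_def lchild_def rchild_def L_def by auto
      have sub: "?W \<subseteq> V" using W2(1) VLV rV LV(1) L_def by auto
      obtain s where as: "a = r @ True # s" using eW2[OF W2(2) leaf_in[OF ab(1)]] by blast
      have "\<not> left_of a L" using as L'(1) not_left_of_RL[of r s "[]"] by simp
      then have "z \<in> tset ?W" using ab lv lL unfolding z tset_def by auto
      then show ?thesis using fW sub unfolding internal_trees_def by blast
    next
      case D
      then obtain a b where z: "z = (a, b)" and a: "a \<in> right_boundary L VL" and b: "b \<in> left_boundary R VR"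
        by blast
      obtain k where ak: "a = L @ replicate k True" "a \<in> VL" using a unfolding right_boundary_def by blast
      obtain m where bm: "b = R @ replicate m False" "b \<in> VR" using b unfolding left_boundary_def by blast
      have "\<exists>W\<subseteq>VL. full_binary_tree L W \<and> L @ replicate k True \<in> leaves W"
        by (rule exists_leaf_tree[OF fVL]) (use ak in simp)
      then obtain W1 where W1: "W1 \<subseteq> VL" "full_binary_tree L W1" "a \<in> leaves W1" using ak(1) by blast
      have "\<exists>W\<subseteq>VR. full_binary_tree R W \<and> R @ replicate m False \<in> leaves W"
        by (rule exists_leaf_tree[OF fVR]) (use bm in simp)
      then obtain W2 where W2: "W2 \<subseteq> VR" "full_binary_tree R W2" "b \<in> leaves W2" using bm(1) by blast
      have f1': "full_binary_tree (lchild r) W1" using W1(2) L_def by simp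
      have f2': "full_binary_tree (rchild r) W2" using W2(2) R_def by simp
      let ?W = "insert r (W1 \<union> W2)"
      have fW: "full_binary_tree r ?W" by (rule combine[OF f1' f2'])
      have lv: "leaves ?W = leaves W1 \<union> leaves W2" by (rule combine_leaves[OF f1' f2'])
      have sub: "?W \<subseteq> V" using W1(1) W2(1) VLV rV by auto
      have lab: "left_of a b" using ak(1) bm(1) L' left_of_LR by simp
      have nc: "\<not> (\<exists>c\<in>leaves ?W. left_of a c \<and> left_of c b)"
      proof
        assume "\<exists>c\<in>leaves ?W. left_of a c \<and> left_of c b"
        then obtain c where c: "c \<in> leaves W1 \<union> leaves W2" "left_of a c" "left_of c b" using lv by auto
        show False
        proof (cases "c \<in> leaves W1")
          case True
          have "rooted_tree L W1" using W1(2) unfolding full_binary_tree_def by simp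
          then obtain s where "c = L @ s" using rooted_ext leaf_in[OF True] by blast
          then have "left_of (replicate k True) s" using c(2) ak(1) left_of_cancel by simp
          then show False using left_of_FalseD by fastforce
        next
          case False
          then have cW2: "c \<in> leaves W2" using c(1) by blast
          have "rooted_tree R W2" using W2(2) unfolding full_binary_tree_def by simp
          then obtain s where "c = R @ s" using rooted_ext leaf_in[OF cW2] by blast
          then have "left_of s (replicate m False)" using c(3) bm(1) left_of_cancel by simp
          then show False using left_of_TrueD by fastforce
        qed
      qed
      have "z \<in> tset ?W" using W1(3) W2(3) lv lab nc unfolding z tset_def by blast
      then show ?thesis using fW sub unfolding internal_trees_def by blast
    qed
  qed
  have "succ_trans r V = succ_trans L VL \<union> succ_trans R VR \<union> (right_boundary L VL \<times> left_boundary R VR)"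
    using LR succ_eq[OF finV] succ_eq[OF finVL(1)] succ_eq[OF finVL(2)] by simp
  then show ?thesis unfolding L_def R_def VL_def VR_def .
qed


end
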